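(* Let $a_{4,0},a_{2,2},a_{0,4}\geqslant0$ with $a_{4,0}+a_{2,2}>0$, $a_{2,2}+a_{0,4}>0$, let $t\in\mathbb{R}$ and $W_t(x,y)=e^{-(a_{4,0}x^4+a_{2,2}x^2y^2+a_{0,4}y^4)+t(x^2+y^2)}$. Let $\{\mathbb{Q}_n(t)\}_{n\geqslant0}$ be the monic orthogonal polynomial system for $W_t$, with $H_n(t)$ and $E_{n,i}(t)$ as in the context. Then for $n\geqslant0$, $$\dot H_n(t)=V_{n+1}(t)H_n(t),$$ where $V_{n+1}(t)=L_{n,1}E_{n+1,1}(t)+L_{n,2}E_{n+1,2}(t)+E_{n,1}(t)L_{n-1,1}+E_{n,2}(t)L_{n-1,2}$ and the dot denotes derivative with respect to $t$.
   Context: $\mathbb{X}_n=(x^n,x^{n-1}y,\dots,y^n)^T$. $L_{n,1}=(I_{n+1}\,|\,0)$ and $L_{n,2}=(0\,|\,I_{n+1})$ are $(n+1)\times(n+2)$ matrices. Inner product $(f,g)_t=\iint_{\mathbb{R}^2}fgW_t\,dx\,dy$, applied entrywise to vectors. The monic orthogonal polynomial system is the sequence of column vectors $\mathbb{Q}_n(t)=\mathbb{X}_n+(\text{vector of polynomials of total degree}<n)$, coefficients depending on $t$, with $(\mathbb{Q}_n(t),\mathbb{Q}_m(t)^T)_t=0$ for $m\neq n$ and $H_n(t):=(\mathbb{Q}_n(t),\mathbb{Q}_n(t)^T)_t$ symmetric positive definite. It satisfies, for $n\geqslant0$, $x\mathbb{Q}_n(t)=L_{n,1}\mathbb{Q}_{n+1}(t)+E_{n,1}(t)\mathbb{Q}_{n-1}(t)$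 and $y\mathbb{Q}_n(t)=L_{n,2}\mathbb{Q}_{n+1}(t)+E_{n,2}(t)\mathbb{Q}_{n-1}(t)$, with $\mathbb{Q}_{-1}=0$, $\mathbb{Q}_0=1$, $E_{n,i}(t)$ of size $(n+1)\times n$ (the terms with $E_{0,i}$ are zero). *)

theory Defs
  imports "HOL-Analysis.Analysis" "Jordan_Normal_Form.Matrix"
begin

definition W :: "real \<Rightarrow> real \<Rightarrow> real \<Rightarrow> real \<Rightarrow> real \<Rightarrow> real \<Rightarrow> real" where
  "W a40 a22 a04 t x y = exp (- (a40 * x^4 + a22 * x^2 * y^2 + a04 * y^4) + t * (x^2 + y^2))"

definition ip :: "real \<Rightarrow> real \<Rightarrow> real \<Rightarrow> real \<Rightarrow> (real \<Rightarrow> real \<Rightarrow> real)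
                  \<Rightarrow> (real \<Rightarrow> real \<Rightarrow> real) \<Rightarrow> real" where
  "ip a40 a22 a04 t f g =
     integral\<^sup>L (lborel :: (real \<times> real) measure) (\<lambda>(x, y). f x y * g x y * W a40 a22 a04 t x y)"

definition ip_defined :: "real \<Rightarrow> real \<Rightarrow> real \<Rightarrow> real \<Rightarrow> (real \<Rightarrow> real \<Rightarrow> real)
                  \<Rightarrow> (real \<Rightarrow> real \<Rightarrow> real) \<Rightarrow> bool" where
  "ip_defined a40 a22 a04 t f g =
     integrable (lborel :: (real \<times> real) measure) (\<lambda>(x, y). f x y * g x y * W a40 a22 a04 t x y)"

text \<open>A vector polynomial system: P n i (i = 0..n) is the i-th component of the column
  vector P_n, which equals X_n = (x^n, x^(n-1) y, ..., y^n)^T plus polynomials of total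
  degree < n.\<close>
definition monic_vec :: "nat \<Rightarrow> (nat \<Rightarrow> real \<Rightarrow> real \<Rightarrow> real) \<Rightarrow> bool" where
  "monic_vec n P \<longleftrightarrow> (\<exists>c :: nat \<Rightarrow> nat \<Rightarrow> nat \<Rightarrow> real. \<forall>i\<le>n. \<forall>x y.
      P i x y = x ^ (n - i) * y ^ i +
        (\<Sum>j\<le>n. \<Sum>k\<le>n. if j + k < n then c i j k * x ^ j * y ^ k else 0))"

definition Hmat :: "real \<Rightarrow> real \<Rightarrow> real \<Rightarrow> real \<Rightarrow> (nat \<Rightarrow> nat \<Rightarrow> real \<Rightarrow> real \<Rightarrow> real)
                     \<Rightarrow> nat \<Rightarrow> real mat" where
  "Hmat a40 a22 a04 t P n = mat (Suc n) (Suc n) (\<lambda>(i, j). ip a40 a22 a04 t (P n i) (P n j))"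

definition sym_pos_def :: "real mat \<Rightarrow> bool" where
  "sym_pos_def A \<longleftrightarrow> A \<in> carrier_mat (dim_row A) (dim_row A) \<and> A\<^sup>T = A \<and>
     (\<forall>v \<in> carrier_vec (dim_row A). v \<noteq> 0\<^sub>v (dim_row A) \<longrightarrow> v \<bullet> (A *\<^sub>v v) > 0)"

definition monic_OPS :: "real \<Rightarrow> real \<Rightarrow> real \<Rightarrow> real \<Rightarrow> (nat \<Rightarrow> nat \<Rightarrow> real \<Rightarrow> real \<Rightarrow> real) \<Rightarrow> bool" where
  "monic_OPS a40 a22 a04 t P \<longleftrightarrow>
     (\<forall>n. monic_vec n (P n)) \<and>
     (\<forall>n m i j. i \<le> n \<longrightarrow> j \<le> m \<longrightarrow> ip_defined a40 a22 a04 t (P n i) (P m j)) \<and>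
     (\<forall>n m i j. n \<noteq> m \<longrightarrow> i \<le> n \<longrightarrow> j \<le> m \<longrightarrow> ip a40 a22 a04 t (P n i) (P m j) = 0) \<and>
     (\<forall>n. sym_pos_def (Hmat a40 a22 a04 t P n))"

text \<open>Lmat r k: for r = n+1 this is L_{n,k} ((n+1) x (n+2)); k = 1 gives (I | 0), k = 2 gives (0 | I).
  Lmat 0 k is the empty 0 x 1 matrix (L_{-1,k}).\<close>
definition Lmat :: "nat \<Rightarrow> nat \<Rightarrow> real mat" where
  "Lmat r k = mat r (Suc r) (\<lambda>(i, j). if (k = 1 \<and> j = i) \<or> (k = 2 \<and> j = Suc i) then 1 else 0)"

text \<open>Three-term relations: x Q_n = L_{n,1} Q_{n+1} + E_{n,1} Q_{n-1},
  y Q_n = L_{n,2} Q_{n+1} + E_{n,2} Q_{n-1}, written componentwise, with E n k of size (n+1) x n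
  (so the E-term vanishes for n = 0).\<close>
definition three_term :: "(nat \<Rightarrow> nat \<Rightarrow> real \<Rightarrow> real \<Rightarrow> real) \<Rightarrow> (nat \<Rightarrow> nat \<Rightarrow> real mat) \<Rightarrow> bool" where
  "three_term P E \<longleftrightarrow>
     (\<forall>n k. (k = 1 \<or> k = 2) \<longrightarrow> E n k \<in> carrier_mat (Suc n) n) \<and>
     (\<forall>n i x y. i \<le> n \<longrightarrow>
        x * P n i x y = (\<Sum>j\<le>Suc n. Lmat (Suc n) 1 $$ (i, j) * P (Suc n) j x y)
                        + (\<Sum>j<n. E n 1 $$ (i, j) * P (n - 1) j x y)) \<and>
     (\<forall>n i x y. i \<le> n \<longrightarrow>
        y * P n i x y = (\<Sum>j\<le>Suc n. Lmat (Suc n) 2 $$ (i, j) * P (Suc n) j x y)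
                        + (\<Sum>j<n. E n 2 $$ (i, j) * P (n - 1) j x y))"

definition Vmat :: "(nat \<Rightarrow> nat \<Rightarrow> real mat) \<Rightarrow> nat \<Rightarrow> real mat" where
  "Vmat E n = Lmat (Suc n) 1 * E (Suc n) 1 + Lmat (Suc n) 2 * E (Suc n) 2
              + E n 1 * Lmat n 1 + E n 2 * Lmat n 2"

end

theory Submission
  imports Defs
begin

lemma deriv_from_bound:
  fixes F :: "real \<Rightarrow> real"
  assumes "\<delta> > 0" and b: "\<And>s. \<bar>s - t\<bar> \<le> \<delta> \<Longrightarrow> \<bar>F s - F t - (s - t) * D\<bar> \<le> C * (s - t)^2"
  shows "(F has_real_derivative D) (at t)"
proof -
  have ev: "\<forall>\<^sub>F s in at t. norm ((F s - F t) / (s - t) - D) \<le> \<bar>C\<bar> * \<bar>s - t\<bar>"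
    unfolding eventually_at
  proof (intro exI[of _ \<delta>] conjI ballI impI)
    fix s assume s: "s \<in> UNIV" "s \<noteq> t \<and> dist s t < \<delta>"
    hence ne: "s - t \<noteq> 0" and le: "\<bar>s - t\<bar> \<le> \<delta>" by (auto simp: dist_real_def)
    have "(F s - F t) / (s - t) - D = (F s - F t - (s - t) * D) / (s - t)"
      using ne by (simp add: field_simps)
    hence "norm ((F s - F t) / (s - t) - D) = \<bar>F s - F t - (s - t) * D\<bar> / \<bar>s - t\<bar>"
      by (simp add: abs_divide)
    also have "\<dots> \<le> C * (s - t)^2 / \<bar>s - t\<bar>"
      using b[OF le] ne by (intro divide_right_mono) auto
    also have "\<dots> = C * \<bar>s - t\<bar>" using ne by (simp add: power2_eq_square field_simps abs_mult_self_eq)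
    also have "\<dots> \<le> \<bar>C\<bar> * \<bar>s - t\<bar>" by (intro mult_right_mono) auto
    finally show "norm ((F s - F t) / (s - t) - D) \<le> \<bar>C\<bar> * \<bar>s - t\<bar>" .
  qed (use assms in auto)
  have lim: "((\<lambda>s. \<bar>C\<bar> * \<bar>s - t\<bar>) \<longlongrightarrow> 0) (at t)"
  proof -
    have "((\<lambda>s. \<bar>C\<bar> * \<bar>s - t\<bar>) \<longlongrightarrow> \<bar>C\<bar> * \<bar>t - t\<bar>) (at t)"
      by (intro tendsto_intros)
    thus ?thesis by simp
  qed
  have "((\<lambda>s. (F s - F t) / (s - t) - D) \<longlongrightarrow> 0) (at t)"
    by (rule Lim_null_comparison[OF ev lim])
  hence "((\<lambda>s. (F s - F t) / (s - t)) \<longlongrightarrow> D) (at t)"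
    by (simp add: LIM_zero_iff)
  thus ?thesis by (simp add: has_field_derivative_iff)
qed

lemma amgm_w:
  fixes p q d w :: real
  assumes "w > 0"
  shows "p * q * d \<le> (q^2 * w + p^2 * d^2 / w) / 2"
proof -
  have "0 \<le> (q * w - p * d)^2" by simp
  hence "2 * (p * q * d) * w \<le> q^2 * w^2 + p^2 * d^2"
    by (simp add: power2_eq_square algebra_simps)
  moreover have "(q^2 * w + p^2 * d^2 / w) * w = q^2 * w^2 + p^2 * d^2"
    using assms by (simp add: field_simps power2_eq_square)
  ultimately have "2 * (p * q * d) * w \<le> (q^2 * w + p^2 * d^2 / w) * w"
    by simp
  hence "2 * (p * q * d) \<le> (q^2 * w + p^2 * d^2 / w)"
    using assms by (simp add: mult_le_cancel_right)
  thus ?thesis by simp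
qed

lemma exp_sub1_sq: "((exp (z::real)) - 1)^2 \<le> z^2 * exp (z + \<bar>z\<bar>)"
proof (cases "z \<ge> 0")
  case True
  have "1 - z \<le> exp (-z)" using exp_ge_add_one_self[of "-z"] by simp
  hence "exp z * (1 - z) \<le> exp z * exp (-z)" by (intro mult_left_mono) auto
  hence a: "exp z - 1 \<le> z * exp z" by (simp add: exp_minus field_simps)
  have b: "0 \<le> exp z - 1" using True by simp
  have "(exp z - 1)^2 \<le> (z * exp z)^2" using a b by (intro power_mono) auto
  also have "\<dots> = z^2 * exp (z + \<bar>z\<bar>)"
  proof -
    have "\<bar>z\<bar> = z" using True by simp
    thus ?thesis by (simp only: exp_add[of z z] power2_eq_square mult_ac)
  qed
  finally show ?thesis .
next
  case False
  have a: "1 - exp z \<le> - z" using exp_ge_add_one_self[of z] by linarith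
  have b: "0 \<le> 1 - exp z" using False by simp
  have "(exp z - 1)^2 = (1 - exp z)^2" by (simp add: power2_commute)
  also have "\<dots> \<le> (-z)^2" using a b by (intro power_mono) auto
  also have "\<dots> = z^2 * exp (z + \<bar>z\<bar>)" using False by simp
  finally show ?thesis .
qed

lemma exp_taylor2: "\<bar>exp (z::real) - 1 - z\<bar> \<le> z^2 * exp \<bar>z\<bar>"
proof (cases "z \<ge> 0")
  case True
  have "1 - z \<le> exp (-z)" using exp_ge_add_one_self[of "-z"] by simp
  hence "exp z * (1 - z) \<le> exp z * exp (-z)" by (intro mult_left_mono) auto
  hence a: "exp z - 1 \<le> z * exp z" by (simp add: exp_minus field_simps)
  have nn: "0 \<le> exp z - 1 - z" using exp_ge_add_one_self[of z] by linarith
  have "exp z - 1 - z \<le> z * (exp z - 1)" using a by (simp add: algebra_simps)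
  also have "\<dots> \<le> z * (z * exp z)" using a True by (intro mult_left_mono) auto
  finally show ?thesis using nn True by (simp add: power2_eq_square)
next
  case False
  define w where "w = - z"
  have w: "w > 0" using False by (simp add: w_def)
  have nn: "0 \<le> exp z - 1 - z" using exp_ge_add_one_self[of z] by linarith
  have "1 + w \<le> exp w" by (rule exp_ge_add_one_self)
  hence "exp z \<le> 1 / (1 + w)" using w by (simp add: w_def exp_minus field_simps)
  hence "exp z - 1 - z \<le> 1 / (1 + w) - 1 + w" by (simp add: w_def)
  also have "\<dots> = w^2 / (1 + w)" using w by (simp add: field_simps power2_eq_square)
  also have "\<dots> \<le> w^2" using w by (simp add: field_simps)
  also have "\<dots> \<le> z^2 * exp \<bar>z\<bar>"
  proof -
    have "1 \<le> exp \<bar>z\<bar>" by simp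
    hence "z^2 * 1 \<le> z^2 * exp \<bar>z\<bar>" by (intro mult_left_mono) auto
    thus ?thesis by (simp add: w_def)
  qed
  finally show ?thesis using nn by simp
qed

lemma ipd_sym: "ip_defined a b c s f g = ip_defined a b c s g f"
  unfolding ip_defined_def by (simp add: mult.commute)

lemma ip_sym: "ip a b c s f g = ip a b c s g f"
  unfolding ip_def by (simp add: mult.commute)

lemma ipd_add_left:
  assumes "ip_defined a b c s f h" "ip_defined a b c s g h"
  shows "ip_defined a b c s (\<lambda>x y. f x y + g x y) h"
    "ip a b c s (\<lambda>x y. f x y + g x y) h = ip a b c s f h + ip a b c s g h"
proof -
  have e: "(\<lambda>(x, y). (f x y + g x y) * h x y * W a b c s x y) =
    (\<lambda>p. (\<lambda>(x, y). f x y * h x y * W a b c s x y) p + (\<lambda>(x, y). g x y * h x y * W a b c s x y) p)"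
    by (auto simp: fun_eq_iff algebra_simps)
  show "ip_defined a b c s (\<lambda>x y. f x y + g x y) h"
    unfolding ip_defined_def e by (rule Bochner_Integration.integrable_add[OF assms[unfolded ip_defined_def]])
  show "ip a b c s (\<lambda>x y. f x y + g x y) h = ip a b c s f h + ip a b c s g h"
    unfolding ip_def e by (rule Bochner_Integration.integral_add[OF assms[unfolded ip_defined_def]])
qed

lemma ipd_smul_left:
  assumes "ip_defined a b c s f h"
  shows "ip_defined a b c s (\<lambda>x y. k * f x y) h"
    "ip a b c s (\<lambda>x y. k * f x y) h = k * ip a b c s f h"
proof -
  have e: "(\<lambda>(x, y). (k * f x y) * h x y * W a b c s x y) =
    (\<lambda>p. k * (\<lambda>(x, y). f x y * h x y * W a b c s x y) p)"
    by (auto simp: fun_eq_iff algebra_simps)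
  show "ip_defined a b c s (\<lambda>x y. k * f x y) h"
    using assms unfolding ip_defined_def e by (intro integrable_mult_right) auto
  show "ip a b c s (\<lambda>x y. k * f x y) h = k * ip a b c s f h"
    using assms unfolding ip_defined_def ip_def e by simp
qed

lemma ipd_zero_left:
  shows "ip_defined a b c s (\<lambda>x y. 0) h" "ip a b c s (\<lambda>x y. 0) h = 0"
proof -
  have "(\<lambda>(x, y). 0 * h x y * W a b c s x y) = (\<lambda>_. 0::real)" by auto
  thus "ip_defined a b c s (\<lambda>x y. 0) h" "ip a b c s (\<lambda>x y. 0) h = 0"
    unfolding ip_defined_def ip_def by simp_all
qed

lemma ipd_diff_left:
  assumes "ip_defined a b c s f h" "ip_defined a b c s g h"
  shows "ip_defined a b c s (\<lambda>x y. f x y - g x y) h"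
    "ip a b c s (\<lambda>x y. f x y - g x y) h = ip a b c s f h - ip a b c s g h"
proof -
  have e: "(\<lambda>x y. f x y - g x y) = (\<lambda>x y. f x y + (-1) * g x y)" by simp
  show "ip_defined a b c s (\<lambda>x y. f x y - g x y) h" unfolding e
    using assms by (intro ipd_add_left ipd_smul_left) auto
  have "ip a b c s (\<lambda>x y. f x y + (-1) * g x y) h = ip a b c s f h + ip a b c s (\<lambda>x y. (-1) * g x y) h"
    by (rule ipd_add_left(2)[OF assms(1) ipd_smul_left(1)[OF assms(2)]])
  also have "\<dots> = ip a b c s f h - ip a b c s g h" using ipd_smul_left(2)[OF assms(2), of "-1"] by simp
  finally show "ip a b c s (\<lambda>x y. f x y - g x y) h = ip a b c s f h - ip a b c s g h" unfolding e .
qed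

lemma ipd_sum_left:
  assumes "\<And>l. l \<in> S \<Longrightarrow> ip_defined a b c s (f l) h"
  shows "ip_defined a b c s (\<lambda>x y. \<Sum>l\<in>S. f l x y) h \<and>
    ip a b c s (\<lambda>x y. \<Sum>l\<in>S. f l x y) h = (\<Sum>l\<in>S. ip a b c s (f l) h)"
  using assms
proof (induction S rule: infinite_finite_induct)
  case (infinite S) thus ?case using ipd_zero_left[of a b c s h] by simp
next
  case empty thus ?case using ipd_zero_left[of a b c s h] by simp
next
  case (insert l S)
  have e: "(\<lambda>x y. \<Sum>l\<in>insert l S. f l x y) = (\<lambda>x y. f l x y + (\<Sum>l\<in>S. f l x y))"
    using insert by simp
  show ?case unfolding e using insert by (simp add: ipd_add_left)
qed

lemma ipd_sum_right:
  assumes "\<And>l. l \<in> S \<Longrightarrow> ip_defined a b c s h (f l)"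
  shows "ip_defined a b c s h (\<lambda>x y. \<Sum>l\<in>S. f l x y) \<and>
    ip a b c s h (\<lambda>x y. \<Sum>l\<in>S. f l x y) = (\<Sum>l\<in>S. ip a b c s h (f l))"
  using ipd_sum_left[of S a b c s f h] assms by (simp add: ipd_sym ip_sym)

inductive polyd :: "nat \<Rightarrow> (real \<Rightarrow> real \<Rightarrow> real) \<Rightarrow> bool" where
  pmon: "i + j \<le> m \<Longrightarrow> polyd m (\<lambda>x y. k * x ^ i * y ^ j)"
| padd: "polyd m f \<Longrightarrow> polyd m g \<Longrightarrow> polyd m (\<lambda>x y. f x y + g x y)"

lemma polyd_zero: "polyd m (\<lambda>x y. 0)"
  using pmon[of 0 0 m 0] by simp

lemma polyd_smul: "polyd m f \<Longrightarrow> polyd m (\<lambda>x y. k * f x y)"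
proof (induction rule: polyd.induct)
  case (pmon i j m c)
  thus ?case using polyd.pmon[of i j m "k * c"] by (simp add: mult.assoc)
next
  case (padd m f g)
  thus ?case using polyd.padd[of m "\<lambda>x y. k * f x y" "\<lambda>x y. k * g x y"] by (simp add: algebra_simps)
qed

lemma polyd_diff: "polyd m f \<Longrightarrow> polyd m g \<Longrightarrow> polyd m (\<lambda>x y. f x y - g x y)"
  using padd[of m f "\<lambda>x y. (-1) * g x y"] polyd_smul[of m g "-1"] by simp

lemma polyd_mono: "polyd m f \<Longrightarrow> m \<le> m' \<Longrightarrow> polyd m' f"
  by (induction rule: polyd.induct) (auto intro: polyd.intros)

lemma polyd_mulx: "polyd m f \<Longrightarrow> polyd (Suc m) (\<lambda>x y. x * f x y)"
proof (induction rule: polyd.induct)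
  case (pmon i j m k)
  thus ?case using polyd.pmon[of "Suc i" j "Suc m" k] by (simp add: algebra_simps)
next
  case (padd m f g)
  thus ?case using polyd.padd[of "Suc m" "\<lambda>x y. x * f x y" "\<lambda>x y. x * g x y"] by (simp add: algebra_simps)
qed

lemma polyd_muly: "polyd m f \<Longrightarrow> polyd (Suc m) (\<lambda>x y. y * f x y)"
proof (induction rule: polyd.induct)
  case (pmon i j m k)
  thus ?case using polyd.pmon[of i "Suc j" "Suc m" k] by (simp add: algebra_simps)
next
  case (padd m f g)
  thus ?case using polyd.padd[of "Suc m" "\<lambda>x y. y * f x y" "\<lambda>x y. y * g x y"] by (simp add: algebra_simps)
qed

lemma polyd_sum: "(\<And>l. l \<in> S \<Longrightarrow> polyd m (f l)) \<Longrightarrow> polyd m (\<lambda>x y. \<Sum>l\<in>S. f l x y)"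
proof (induction S rule: infinite_finite_induct)
  case (insert l S)
  thus ?case using polyd.padd[of m "f l" "\<lambda>x y. \<Sum>l\<in>S. f l x y"] by simp
qed (auto simp: polyd_zero)

lemma polyd_r: "polyd m f \<Longrightarrow> polyd (Suc (Suc m)) (\<lambda>x y. f x y * (x^2 + y^2))"
proof -
  assume f: "polyd m f"
  have "polyd (Suc (Suc m)) (\<lambda>x y. x * (x * f x y) + y * (y * f x y))"
    by (intro padd polyd_mulx polyd_muly f)
  thus ?thesis by (simp add: algebra_simps power2_eq_square)
qed

inductive spanQ :: "(nat \<Rightarrow> nat \<Rightarrow> real \<Rightarrow> real \<Rightarrow> real) \<Rightarrow> nat \<Rightarrow> (real \<Rightarrow> real \<Rightarrow> real) \<Rightarrow> bool"
  for P where
  sgen: "k \<le> m \<Longrightarrow> l \<le> k \<Longrightarrow> spanQ P m (P k l)"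
| szero: "spanQ P m (\<lambda>x y. 0)"
| sadd: "spanQ P m f \<Longrightarrow> spanQ P m g \<Longrightarrow> spanQ P m (\<lambda>x y. f x y + g x y)"
| ssmul: "spanQ P m f \<Longrightarrow> spanQ P m (\<lambda>x y. c * f x y)"

lemma spanQ_mono: "spanQ P m f \<Longrightarrow> m \<le> m' \<Longrightarrow> spanQ P m' f"
  by (induction rule: spanQ.induct) (auto intro: spanQ.intros)

lemma spanQ_sum: "(\<And>l. l \<in> S \<Longrightarrow> spanQ P m (f l)) \<Longrightarrow> spanQ P m (\<lambda>x y. \<Sum>l\<in>S. f l x y)"
proof (induction S rule: infinite_finite_induct)
  case (insert l S)
  thus ?case using spanQ.sadd[of P m "f l" "\<lambda>x y. \<Sum>l\<in>S. f l x y"] by simp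
qed (auto intro: spanQ.intros)

lemma spanQ_mulx:
  assumes tt: "three_term P E"
  shows "spanQ P m f \<Longrightarrow> spanQ P (Suc m) (\<lambda>x y. x * f x y)"
proof (induction rule: spanQ.induct)
  case (sgen k m l)
  have e: "(\<lambda>x y. x * P k l x y) = (\<lambda>x y. (\<Sum>j\<le>Suc k. Lmat (Suc k) 1 $$ (l, j) * P (Suc k) j x y)
                        + (\<Sum>j<k. E k 1 $$ (l, j) * P (k - 1) j x y))"
    using tt sgen unfolding three_term_def by auto
  show ?case unfolding e
    by (intro spanQ.sadd spanQ_sum spanQ.ssmul spanQ.sgen) (use sgen in auto)
next
  case (szero m) thus ?case using spanQ.szero[of P "Suc m"] by simp
next
  case (sadd m f g) thus ?case
    using spanQ.sadd[of P "Suc m" "\<lambda>x y. x * f x y" "\<lambda>x y. x * g x y"] by (simp add: algebra_simps)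
next
  case (ssmul m f c) thus ?case
    using spanQ.ssmul[of P "Suc m" "\<lambda>x y. x * f x y" c] by (simp add: algebra_simps)
qed

lemma spanQ_muly:
  assumes tt: "three_term P E"
  shows "spanQ P m f \<Longrightarrow> spanQ P (Suc m) (\<lambda>x y. y * f x y)"
proof (induction rule: spanQ.induct)
  case (sgen k m l)
  have e: "(\<lambda>x y. y * P k l x y) = (\<lambda>x y. (\<Sum>j\<le>Suc k. Lmat (Suc k) 2 $$ (l, j) * P (Suc k) j x y)
                        + (\<Sum>j<k. E k 2 $$ (l, j) * P (k - 1) j x y))"
    using tt sgen unfolding three_term_def by auto
  show ?case unfolding e
    by (intro spanQ.sadd spanQ_sum spanQ.ssmul spanQ.sgen) (use sgen in auto)
next
  case (szero m) thus ?case using spanQ.szero[of P "Suc m"] by simp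
next
  case (sadd m f g) thus ?case
    using spanQ.sadd[of P "Suc m" "\<lambda>x y. y * f x y" "\<lambda>x y. y * g x y"] by (simp add: algebra_simps)
next
  case (ssmul m f c) thus ?case
    using spanQ.ssmul[of P "Suc m" "\<lambda>x y. y * f x y" c] by (simp add: algebra_simps)
qed

lemma spanQ_mon:
  assumes tt: "three_term P E" and p0: "P 0 0 = (\<lambda>x y. 1)"
  shows "spanQ P (i + j) (\<lambda>x y. k * x ^ i * y ^ j)"
proof -
  have c: "spanQ P 0 (\<lambda>x y. k)"
    using spanQ.ssmul[OF spanQ.sgen[of 0 0 0 P], of k] p0 by simp
  have y: "spanQ P j (\<lambda>x y. k * y ^ j)" for j
  proof (induction j)
    case 0 thus ?case using c by simp
  next
    case (Suc j) thus ?case using spanQ_muly[OF tt Suc] by (simp add: algebra_simps)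
  qed
  have "spanQ P (j + i) (\<lambda>x y. k * x ^ i * y ^ j)" for i
  proof (induction i)
    case 0 thus ?case using y by simp
  next
    case (Suc i) thus ?case using spanQ_mulx[OF tt Suc] by (simp add: algebra_simps)
  qed
  thus ?thesis by (simp add: add.commute)
qed

lemma polyd_spanQ:
  assumes tt: "three_term P E" and p0: "P 0 0 = (\<lambda>x y. 1)"
  shows "polyd m f \<Longrightarrow> spanQ P m f"
proof (induction rule: polyd.induct)
  case (pmon i j m k) thus ?case using spanQ_mon[OF tt p0, of i j k] spanQ_mono by blast
next
  case (padd m f g) show ?case using padd.IH by (rule spanQ.sadd)
qed

lemma spanQ_ipd:
  assumes d: "\<And>k l k' l'. l \<le> k \<Longrightarrow> l' \<le> k' \<Longrightarrow> ip_defined a1 a2 a3 s (P k l) (P k' l')"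
  shows "spanQ P m f \<Longrightarrow> spanQ P m' g \<Longrightarrow> ip_defined a1 a2 a3 s f g"
proof (induction arbitrary: g rule: spanQ.induct)
  case (sgen k m l)
  note outer = sgen
  from sgen(3) show ?case
  proof (induction rule: spanQ.induct)
    case (sgen k' m' l') thus ?case using d outer by auto
  next
    case (szero m) thus ?case using ipd_zero_left(1) ipd_sym by blast
  next
    case (sadd m' f g) thus ?case using ipd_add_left(1)[of a1 a2 a3 s f "P k l" g] ipd_sym by blast
  next
    case (ssmul m' f c) thus ?case using ipd_smul_left(1)[of a1 a2 a3 s f "P k l" c] ipd_sym by blast
  qed
next
  case (szero m) show ?case by (rule ipd_zero_left(1))
next
  case (sadd m f g) thus ?case by (intro ipd_add_left(1)) auto
next
  case (ssmul m f c) thus ?case by (intro ipd_smul_left(1)) auto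
qed

lemma spanQ_orth:
  assumes d: "\<And>k l k' l'. l \<le> k \<Longrightarrow> l' \<le> k' \<Longrightarrow> ip_defined a1 a2 a3 s (P k l) (P k' l')"
    and o: "\<And>k l. k < n \<Longrightarrow> l \<le> k \<Longrightarrow> ip a1 a2 a3 s (P k l) (P n i) = 0"
    and iin: "i \<le> n"
  shows "spanQ P m f \<Longrightarrow> m < n \<Longrightarrow> ip a1 a2 a3 s f (P n i) = 0"
proof -
  have dd: "ip_defined a1 a2 a3 s f1 g1" if "spanQ P m1 f1" "spanQ P m2 g1" for m1 m2 f1 g1
    using d that by (rule spanQ_ipd)
  have sg: "spanQ P n (P n i)" by (rule spanQ.sgen) (use iin in auto)
  show "spanQ P m f \<Longrightarrow> m < n \<Longrightarrow> ip a1 a2 a3 s f (P n i) = 0"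
proof (induction rule: spanQ.induct)
  case (sgen k m l) thus ?case using o by auto
next
  case (szero m) thus ?case by (simp add: ipd_zero_left)
next
  case (sadd m f g)
  have "ip_defined a1 a2 a3 s f (P n i)" "ip_defined a1 a2 a3 s g (P n i)"
    using dd sadd sg by blast+
  thus ?case using sadd by (simp add: ipd_add_left)
next
  case (ssmul m f k)
  have "ip_defined a1 a2 a3 s f (P n i)"
    using dd ssmul sg by blast
  thus ?case using ssmul by (simp add: ipd_smul_left)
qed

qed

definition lowp :: "nat \<Rightarrow> (nat \<Rightarrow> nat \<Rightarrow> real) \<Rightarrow> real \<Rightarrow> real \<Rightarrow> real" where
  "lowp n c = (\<lambda>x y. \<Sum>j\<le>n. \<Sum>k\<le>n. if j + k < n then c j k * x ^ j * y ^ k else 0)"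

lemma lowp_polyd: "polyd (n - 1) (lowp n c)"
  unfolding lowp_def
proof (intro polyd_sum)
  fix j k assume "j \<in> {..n}" "k \<in> {..n}"
  show "polyd (n - 1) (\<lambda>x y. if j + k < n then c j k * x ^ j * y ^ k else 0)"
  proof (cases "j + k < n")
    case True thus ?thesis using pmon[of j k "n - 1" "c j k"] by simp
  next
    case False thus ?thesis using polyd_zero by simp
  qed
qed

lemma lowp_0: "lowp 0 c = (\<lambda>x y. 0)"
  unfolding lowp_def by simp

lemma monic_vec_form:
  assumes "monic_vec n P" "i \<le> n"
  shows "\<exists>c. P i = (\<lambda>x y. x ^ (n - i) * y ^ i + lowp n c x y)"
proof -
  obtain c where c: "\<forall>i\<le>n. \<forall>x y. P i x y = x ^ (n - i) * y ^ i +
        (\<Sum>j\<le>n. \<Sum>k\<le>n. if j + k < n then c i j k * x ^ j * y ^ k else 0)"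
    using assms(1) unfolding monic_vec_def by blast
  show ?thesis
  proof (rule exI[of _ "c i"], rule ext, rule ext)
    fix x y show "P i x y = x ^ (n - i) * y ^ i + lowp n (c i) x y"
      using c assms(2) unfolding lowp_def by simp
  qed
qed

lemma monic_vec_polyd:
  assumes "monic_vec n P" "i \<le> n"
  shows "polyd n (P i)"
proof -
  obtain c where c: "P i = (\<lambda>x y. x ^ (n - i) * y ^ i + lowp n c x y)"
    using monic_vec_form[OF assms] by blast
  have "polyd n (\<lambda>x y. 1 * x ^ (n - i) * y ^ i + lowp n c x y)"
    by (intro padd pmon polyd_mono[OF lowp_polyd]) (use assms in auto)
  thus ?thesis unfolding c by simp
qed

lemma monic_vec_diff:
  assumes "monic_vec n P" "monic_vec n P'" "i \<le> n"
  shows "(n = 0 \<and> (\<lambda>x y. P i x y - P' i x y) = (\<lambda>x y. 0)) \<or>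
         (0 < n \<and> polyd (n - 1) (\<lambda>x y. P i x y - P' i x y))"
proof -
  obtain c where c: "P i = (\<lambda>x y. x ^ (n - i) * y ^ i + lowp n c x y)"
    using monic_vec_form[OF assms(1,3)] by blast
  obtain c' where c': "P' i = (\<lambda>x y. x ^ (n - i) * y ^ i + lowp n c' x y)"
    using monic_vec_form[OF assms(2,3)] by blast
  have e: "(\<lambda>x y. P i x y - P' i x y) = (\<lambda>x y. lowp n c x y - lowp n c' x y)"
    unfolding c c' by simp
  show ?thesis
  proof (cases "n = 0")
    case True thus ?thesis unfolding e by (simp add: lowp_0)
  next
    case False
    have "polyd (n - 1) (\<lambda>x y. lowp n c x y - lowp n c' x y)"
      by (intro polyd_diff lowp_polyd)
    thus ?thesis unfolding e using False by simp
  qed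
qed

locale ops_setting =
  fixes a40 a22 a04 :: real and U :: "real set"
    and Q :: "real \<Rightarrow> nat \<Rightarrow> nat \<Rightarrow> real \<Rightarrow> real \<Rightarrow> real"
    and E :: "real \<Rightarrow> nat \<Rightarrow> nat \<Rightarrow> real mat"
  assumes ops: "\<And>s. s \<in> U \<Longrightarrow> monic_OPS a40 a22 a04 s (Q s)"
    and tt: "\<And>s. s \<in> U \<Longrightarrow> three_term (Q s) (E s)"
begin

lemma Qmv: "s \<in> U \<Longrightarrow> monic_vec n (Q s n)"
  using ops unfolding monic_OPS_def by simp

lemma Q00: "s \<in> U \<Longrightarrow> Q s 0 0 = (\<lambda>x y. 1)"
proof -
  assume s: "s \<in> U"
  have "monic_vec 0 (Q s 0)" by (rule Qmv[OF s])
  then obtain c where "Q s 0 0 = (\<lambda>x y. x ^ (0 - 0) * y ^ 0 + lowp 0 c x y)"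
    using monic_vec_form[of 0 "Q s 0" 0] by auto
  thus ?thesis by (simp add: lowp_0)
qed

lemma Qpoly: "s \<in> U \<Longrightarrow> i \<le> n \<Longrightarrow> polyd n (Q s n i)"
  by (rule monic_vec_polyd[OF Qmv])

lemma Qdef: "s \<in> U \<Longrightarrow> l \<le> k \<Longrightarrow> l' \<le> k' \<Longrightarrow> ip_defined a40 a22 a04 s (Q s k l) (Q s k' l')"
  using ops unfolding monic_OPS_def by simp

lemma pd: "s \<in> U \<Longrightarrow> polyd m f \<Longrightarrow> polyd m' g \<Longrightarrow> ip_defined a40 a22 a04 s f g"
proof -
  assume s: "s \<in> U" and f: "polyd m f" and g: "polyd m' g"
  have sf: "spanQ (Q s) m f" by (rule polyd_spanQ[OF tt[OF s] Q00[OF s] f])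
  have sg: "spanQ (Q s) m' g" by (rule polyd_spanQ[OF tt[OF s] Q00[OF s] g])
  have d: "\<And>k l k' l'. l \<le> k \<Longrightarrow> l' \<le> k' \<Longrightarrow> ip_defined a40 a22 a04 s (Q s k l) (Q s k' l')"
    using Qdef[OF s] by blast
  show ?thesis using d sf sg by (rule spanQ_ipd)
qed

lemma orth: "s \<in> U \<Longrightarrow> polyd m f \<Longrightarrow> m < n \<Longrightarrow> i \<le> n \<Longrightarrow> ip a40 a22 a04 s f (Q s n i) = 0"
proof -
  assume s: "s \<in> U" and f: "polyd m f" and mn: "m < n" and i: "i \<le> n"
  have sf: "spanQ (Q s) m f" by (rule polyd_spanQ[OF tt[OF s] Q00[OF s] f])
  have d: "\<And>k l k' l'. l \<le> k \<Longrightarrow> l' \<le> k' \<Longrightarrow> ip_defined a40 a22 a04 s (Q s k l) (Q s k' l')"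
    using Qdef[OF s] by blast
  have o: "\<And>k l. k < n \<Longrightarrow> l \<le> k \<Longrightarrow> ip a40 a22 a04 s (Q s k l) (Q s n i) = 0"
    using ops[OF s] i unfolding monic_OPS_def by simp
  show ?thesis using spanQ_orth[OF d o i sf mn] by blast
qed

lemma Qdiff_poly: "s \<in> U \<Longrightarrow> u \<in> U \<Longrightarrow> i \<le> n \<Longrightarrow> polyd n (\<lambda>x y. Q u n i x y - Q s n i x y)"
  by (intro polyd_diff Qpoly)

lemma orth_diff3: "s \<in> U \<Longrightarrow> u \<in> U \<Longrightarrow> v \<in> U \<Longrightarrow> i \<le> n \<Longrightarrow> j \<le> n \<Longrightarrow>
    ip a40 a22 a04 v (\<lambda>x y. Q u n i x y - Q s n i x y) (Q v n j) = 0"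
proof -
  assume s: "s \<in> U" and u: "u \<in> U" and v: "v \<in> U" and i: "i \<le> n" and j: "j \<le> n"
  have mv: "monic_vec n (Q u n)" "monic_vec n (Q s n)" using Qmv[OF u] Qmv[OF s] by blast+
  from monic_vec_diff[OF mv i] show ?thesis
  proof
    assume "n = 0 \<and> (\<lambda>x y. Q u n i x y - Q s n i x y) = (\<lambda>x y. 0)"
    hence e: "(\<lambda>x y. Q u n i x y - Q s n i x y) = (\<lambda>x y. 0)" by blast
    show ?thesis unfolding e by (rule ipd_zero_left(2))
  next
    assume "0 < n \<and> polyd (n - 1) (\<lambda>x y. Q u n i x y - Q s n i x y)"
    thus ?thesis using orth[OF v _ _ j, of "n - 1"] by auto
  qed
qed

lemma orth_diff: "s \<in> U \<Longrightarrow> u \<in> U \<Longrightarrow> i \<le> n \<Longrightarrow> j \<le> n \<Longrightarrow>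
    ip a40 a22 a04 s (\<lambda>x y. Q u n i x y - Q s n i x y) (Q s n j) = 0"
  by (rule orth_diff3)

end

lemma W_shift: "W a b c s x y = W a b c t x y * exp ((s - t) * (x^2 + y^2))"
  unfolding W_def by (simp add: exp_add[symmetric] algebra_simps)

lemma W_pos: "W a b c s x y > 0"
  unfolding W_def by simp

lemma W_sq_bound:
  assumes "\<bar>s - t\<bar> \<le> \<delta>"
  shows "(W a b c s x y - W a b c t x y)^2 / W a b c s x y
         \<le> (s - t)^2 * (x^2 + y^2)^2 * W a b c (t + \<delta>) x y"
proof -
  define r where "r = x^2 + y^2"
  define h where "h = s - t"
  define w where "w = W a b c t x y"
  have r: "r \<ge> 0" unfolding r_def by simp
  have w: "w > 0" unfolding w_def by (rule W_pos)
  have ws: "W a b c s x y = w * exp (h * r)" unfolding w_def h_def r_def by (rule W_shift)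
  have wd: "W a b c (t + \<delta>) x y = w * exp (\<delta> * r)" unfolding w_def r_def using W_shift[of a b c "t + \<delta>" x y t] by simp
  have "(W a b c s x y - W a b c t x y)^2 / W a b c s x y = w * (exp (h * r) - 1)^2 * exp (- (h * r))"
    unfolding ws w_def[symmetric] using w by (simp add: power2_eq_square field_simps exp_minus)
  also have "\<dots> \<le> w * ((h * r)^2 * exp (h * r + \<bar>h * r\<bar>)) * exp (- (h * r))"
    using w by (intro mult_right_mono mult_left_mono exp_sub1_sq) auto
  also have "\<dots> = w * (h * r)^2 * exp (\<bar>h * r\<bar>)"
    by (simp add: exp_add exp_minus field_simps)
  also have "\<dots> \<le> w * (h * r)^2 * exp (\<delta> * r)"
  proof -
    have "\<bar>h * r\<bar> = \<bar>h\<bar> * r" using r by (simp add: abs_mult)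
    also have "\<dots> \<le> \<delta> * r" using assms r unfolding h_def by (intro mult_right_mono) auto
    finally show ?thesis using w by (intro mult_left_mono) auto
  qed
  also have "\<dots> = h^2 * r^2 * W a b c (t + \<delta>) x y" unfolding wd by (simp add: power_mult_distrib)
  finally show ?thesis unfolding h_def r_def .
qed

lemma W_taylor_bound:
  assumes "\<bar>s - t\<bar> \<le> \<delta>"
  shows "\<bar>W a b c s x y - W a b c t x y - (s - t) * (x^2 + y^2) * W a b c t x y\<bar>
         \<le> (s - t)^2 * (x^2 + y^2)^2 * W a b c (t + \<delta>) x y"
proof -
  define r where "r = x^2 + y^2"
  define h where "h = s - t"
  define w where "w = W a b c t x y"
  have r: "r \<ge> 0" unfolding r_def by simp
  have w: "w > 0" unfolding w_def by (rule W_pos)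
  have ws: "W a b c s x y = w * exp (h * r)" unfolding w_def h_def r_def by (rule W_shift)
  have wd: "W a b c (t + \<delta>) x y = w * exp (\<delta> * r)" unfolding w_def r_def using W_shift[of a b c "t + \<delta>" x y t] by simp
  have "\<bar>W a b c s x y - W a b c t x y - (s - t) * (x^2 + y^2) * W a b c t x y\<bar>
     = w * \<bar>exp (h * r) - 1 - h * r\<bar>"
  proof -
    have "W a b c s x y - W a b c t x y - (s - t) * (x^2 + y^2) * W a b c t x y
        = w * (exp (h * r) - 1 - h * r)"
      unfolding ws by (simp add: w_def h_def r_def algebra_simps)
    thus ?thesis using w by (simp add: abs_mult)
  qed
  also have "\<dots> \<le> w * ((h * r)^2 * exp \<bar>h * r\<bar>)"
    using w by (intro mult_left_mono exp_taylor2) auto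
  also have "\<dots> \<le> w * ((h * r)^2 * exp (\<delta> * r))"
  proof -
    have "\<bar>h * r\<bar> = \<bar>h\<bar> * r" using r by (simp add: abs_mult)
    also have "\<dots> \<le> \<delta> * r" using assms r unfolding h_def by (intro mult_right_mono) auto
    finally show ?thesis using w by (intro mult_left_mono) auto
  qed
  also have "\<dots> = h^2 * r^2 * W a b c (t + \<delta>) x y" unfolding wd by (simp add: power_mult_distrib)
  finally show ?thesis unfolding h_def r_def .
qed

lemma int_le:
  fixes F1 F2 g :: "'a \<Rightarrow> real"
  assumes "integrable M F1" "integrable M F2"
    and "\<And>p. g p \<le> c1 * F1 p + c2 * F2 p" and "\<And>p. 0 \<le> c1 * F1 p + c2 * F2 p"
  shows "integral\<^sup>L M g \<le> c1 * integral\<^sup>L M F1 + c2 * integral\<^sup>L M F2"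
proof -
  have i: "integrable M (\<lambda>p. c1 * F1 p + c2 * F2 p)" using assms by auto
  have "integral\<^sup>L M g \<le> integral\<^sup>L M (\<lambda>p. c1 * F1 p + c2 * F2 p)"
    by (rule integral_mono'[OF i]) (use assms in auto)
  also have "\<dots> = c1 * integral\<^sup>L M F1 + c2 * integral\<^sup>L M F2"
    using assms by (simp add: Bochner_Integration.integral_add)
  finally show ?thesis .
qed

context ops_setting begin

abbreviation K where "K s f g \<equiv> (\<lambda>(x::real, y::real). f x y * g x y * W a40 a22 a04 s x y)"

lemma ipK: "ip a40 a22 a04 s f g = integral\<^sup>L lborel (K s f g)"
  by (simp add: ip_def)

lemma idK: "ip_defined a40 a22 a04 s f g = integrable lborel (K s f g)"
  by (simp add: ip_defined_def)

lemma alpha_bound: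
  assumes t: "t \<in> U" and s: "s \<in> U" and td: "t + \<delta> \<in> U" and hd: "\<bar>s - t\<bar> \<le> \<delta>" and i: "i \<le> n"
  shows "ip a40 a22 a04 s (\<lambda>x y. Q t n i x y - Q s n i x y) (\<lambda>x y. Q t n i x y - Q s n i x y)
     \<le> (s - t)^2 * ip a40 a22 a04 (t + \<delta>) (\<lambda>x y. Q t n i x y * (x^2 + y^2)) (\<lambda>x y. Q t n i x y * (x^2 + y^2))"
proof -
  define A where "A = Q t n i"
  define a where "a = Q s n i"
  define \<alpha> where "\<alpha> = (\<lambda>x y. A x y - a x y)"
  define Ar where "Ar = (\<lambda>x y. A x y * (x^2 + y^2))"
  define h where "h = s - t"
  have pA: "polyd n A" unfolding A_def by (rule Qpoly[OF t i])
  have pa: "polyd n a" unfolding a_def by (rule Qpoly[OF s i])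
  have p\<alpha>: "polyd n \<alpha>" unfolding \<alpha>_def by (rule polyd_diff[OF pA pa])
  have pAr: "polyd (Suc (Suc n)) Ar" unfolding Ar_def by (rule polyd_r[OF pA])
  have e1: "A = (\<lambda>x y. a x y + \<alpha> x y)" unfolding \<alpha>_def by simp
  have "ip a40 a22 a04 s \<alpha> \<alpha> = ip a40 a22 a04 s A \<alpha> - ip a40 a22 a04 s a \<alpha>"
    unfolding e1 by (simp add: ipd_add_left pd[OF s pa p\<alpha>] pd[OF s p\<alpha> p\<alpha>])
  also have "ip a40 a22 a04 s a \<alpha> = 0"
    unfolding \<alpha>_def A_def a_def by (subst ip_sym) (rule orth_diff[OF s t i i])
  finally have x1: "ip a40 a22 a04 s \<alpha> \<alpha> = ip a40 a22 a04 s A \<alpha>" by simp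
  have o4: "ip a40 a22 a04 t A \<alpha> = 0"
    unfolding \<alpha>_def A_def a_def by (subst ip_sym) (rule orth_diff3[OF s t t i i])
  have "ip a40 a22 a04 s A \<alpha> - ip a40 a22 a04 t A \<alpha> = integral\<^sup>L lborel (\<lambda>p. K s A \<alpha> p - K t A \<alpha> p)"
    unfolding ipK by (rule Bochner_Integration.integral_diff[symmetric])
      (use pd[OF s pA p\<alpha>] pd[OF t pA p\<alpha>] in \<open>simp_all add: idK\<close>)
  also have "\<dots> \<le> (1/2) * integral\<^sup>L lborel (K s \<alpha> \<alpha>) + (h^2/2) * integral\<^sup>L lborel (K (t + \<delta>) Ar Ar)"
  proof (rule int_le)
    show "integrable lborel (K s \<alpha> \<alpha>)" using pd[OF s p\<alpha> p\<alpha>] by (simp add: idK)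
    show "integrable lborel (K (t + \<delta>) Ar Ar)" using pd[OF td pAr pAr] by (simp add: idK)
  next
    fix p :: "real \<times> real"
    obtain x y where p: "p = (x, y)" by (cases p)
    define ws where "ws = W a40 a22 a04 s x y"
    define wt where "wt = W a40 a22 a04 t x y"
    define wd where "wd = W a40 a22 a04 (t + \<delta>) x y"
    have ws: "ws > 0" unfolding ws_def by (rule W_pos)
    have wd: "wd \<ge> 0" unfolding wd_def using W_pos[of a40 a22 a04 "t + \<delta>" x y] by simp
    have b1: "A x y * \<alpha> x y * (ws - wt) \<le> ((\<alpha> x y)^2 * ws + (A x y)^2 * (ws - wt)^2 / ws) / 2"
      by (rule amgm_w[OF ws])
    have b2: "(ws - wt)^2 / ws \<le> h^2 * (x^2 + y^2)^2 * wd"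
      unfolding ws_def wt_def wd_def h_def by (rule W_sq_bound[OF hd])
    have b3: "(A x y)^2 * ((ws - wt)^2 / ws) \<le> (A x y)^2 * (h^2 * (x^2 + y^2)^2 * wd)"
      by (rule mult_left_mono[OF b2]) simp
    have e: "(1/2) * K s \<alpha> \<alpha> p + (h^2/2) * K (t + \<delta>) Ar Ar p
       = ((\<alpha> x y)^2 * ws + (A x y)^2 * (h^2 * (x^2 + y^2)^2 * wd)) / 2"
      unfolding p Ar_def ws_def wd_def by (simp add: power2_eq_square algebra_simps)
    have e2: "K s A \<alpha> p - K t A \<alpha> p = A x y * \<alpha> x y * (ws - wt)"
      unfolding p ws_def wt_def by (simp add: algebra_simps)
    show "K s A \<alpha> p - K t A \<alpha> p \<le> (1/2) * K s \<alpha> \<alpha> p + (h^2/2) * K (t + \<delta>) Ar Ar p"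
      unfolding e e2 using b1 b3 by (simp add: divide_right_mono)
    show "0 \<le> (1/2) * K s \<alpha> \<alpha> p + (h^2/2) * K (t + \<delta>) Ar Ar p"
      unfolding e using ws wd by (intro divide_nonneg_pos add_nonneg_nonneg mult_nonneg_nonneg) auto
  qed
  finally have "ip a40 a22 a04 s \<alpha> \<alpha> \<le> (1/2) * ip a40 a22 a04 s \<alpha> \<alpha> + (h^2/2) * ip a40 a22 a04 (t + \<delta>) Ar Ar"
    using x1 o4 by (simp add: ipK)
  hence "ip a40 a22 a04 s \<alpha> \<alpha> \<le> h^2 * ip a40 a22 a04 (t + \<delta>) Ar Ar" by simp
  thus ?thesis unfolding \<alpha>_def A_def a_def Ar_def h_def .
qed

end

lemma alg1: "((a^2 + b^2)/2) * (h^2 * r^2 * w) = (h^2/2) * (a * r * (a * r) * w) + (h^2/2) * (b * r * (b * r) * w)"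
  for a b h r w :: real
  by (simp add: field_simps power2_eq_square)

context ops_setting begin

lemma cross_part:
  assumes s: "s \<in> U" and pf: "polyd m f" and pg: "polyd m' g"
  shows "\<bar>ip a40 a22 a04 s f g\<bar> \<le> (ip a40 a22 a04 s f f + ip a40 a22 a04 s g g) / 2"
proof -
  have i1: "integrable lborel (K s f f)" using pd[OF s pf pf] by (simp add: idK)
  have i2: "integrable lborel (K s g g)" using pd[OF s pg pg] by (simp add: idK)
  have pt: "\<bar>K s f g p\<bar> \<le> (1/2) * K s f f p + (1/2) * K s g g p" for p
  proof -
    obtain x y where p: "p = (x, y)" by (cases p)
    define w where "w = W a40 a22 a04 s x y"
    have w: "w > 0" unfolding w_def by (rule W_pos)
    have "\<bar>f x y * g x y\<bar> \<le> ((f x y)^2 + (g x y)^2) / 2"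
    proof -
      have "0 \<le> (\<bar>f x y\<bar> - \<bar>g x y\<bar>)^2" by simp
      thus ?thesis by (simp add: power2_eq_square algebra_simps abs_mult)
    qed
    hence "\<bar>f x y * g x y\<bar> * w \<le> ((f x y)^2 + (g x y)^2) / 2 * w"
      using w by (intro mult_right_mono) auto
    thus ?thesis unfolding p using w by (simp add: abs_mult w_def[symmetric] power2_eq_square algebra_simps)
  qed
  have nn: "0 \<le> (1/2) * K s f f p + (1/2) * K s g g p" for p
    using pt[of p] by (meson abs_ge_zero order_trans)
  have pt1: "K s f g p \<le> (1/2) * K s f f p + (1/2) * K s g g p" for p
    using pt[of p] by (simp only: abs_le_iff)
  have pt2: "- K s f g p \<le> (1/2) * K s f f p + (1/2) * K s g g p" for p
    using pt[of p] by (simp only: abs_le_iff)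
  have "ip a40 a22 a04 s f g \<le> (1/2) * ip a40 a22 a04 s f f + (1/2) * ip a40 a22 a04 s g g"
    unfolding ipK by (rule int_le[OF i1 i2 pt1 nn])
  moreover have "- ip a40 a22 a04 s f g \<le> (1/2) * ip a40 a22 a04 s f f + (1/2) * ip a40 a22 a04 s g g"
  proof -
    have "integral\<^sup>L lborel (\<lambda>p. - K s f g p) \<le> (1/2) * integral\<^sup>L lborel (K s f f) + (1/2) * integral\<^sup>L lborel (K s g g)"
      by (rule int_le[OF i1 i2 pt2 nn])
    thus ?thesis by (simp add: ipK)
  qed
  ultimately show ?thesis by (simp add: abs_le_iff)
qed

lemma taylor_part:
  assumes t: "t \<in> U" and s: "s \<in> U" and td: "t + \<delta> \<in> U" and hd: "\<bar>s - t\<bar> \<le> \<delta>"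
    and pA: "polyd m A" and pB: "polyd m' B"
  shows "\<bar>ip a40 a22 a04 s A B - ip a40 a22 a04 t A B - (s - t) * ip a40 a22 a04 t (\<lambda>x y. A x y * (x^2 + y^2)) B\<bar>
    \<le> ((s - t)^2 / 2) * (ip a40 a22 a04 (t + \<delta>) (\<lambda>x y. A x y * (x^2 + y^2)) (\<lambda>x y. A x y * (x^2 + y^2))
        + ip a40 a22 a04 (t + \<delta>) (\<lambda>x y. B x y * (x^2 + y^2)) (\<lambda>x y. B x y * (x^2 + y^2)))"
proof -
  define Ar where "Ar = (\<lambda>x y. A x y * (x^2 + y^2))"
  define Br where "Br = (\<lambda>x y. B x y * (x^2 + y^2))"
  define h where "h = s - t"
  have pAr: "polyd (Suc (Suc m)) Ar" unfolding Ar_def by (rule polyd_r[OF pA])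
  have pBr: "polyd (Suc (Suc m')) Br" unfolding Br_def by (rule polyd_r[OF pB])
  have i1: "integrable lborel (K (t + \<delta>) Ar Ar)" using pd[OF td pAr pAr] by (simp add: idK)
  have i2: "integrable lborel (K (t + \<delta>) Br Br)" using pd[OF td pBr pBr] by (simp add: idK)
  have j1: "integrable lborel (K s A B)" using pd[OF s pA pB] by (simp add: idK)
  have j2: "integrable lborel (K t A B)" using pd[OF t pA pB] by (simp add: idK)
  have j3: "integrable lborel (K t Ar B)" using pd[OF t pAr pB] by (simp add: idK)
  define G where "G = (\<lambda>p. K s A B p - K t A B p - h * K t Ar B p)"
  have IG: "integral\<^sup>L lborel G = ip a40 a22 a04 s A B - ip a40 a22 a04 t A B - h * ip a40 a22 a04 t Ar B"
  proof -
    have "integral\<^sup>L lborel G = integral\<^sup>L lborel (\<lambda>p. K s A B p - K t A B p) - integral\<^sup>L lborel (\<lambda>p. h * K t Ar B p)"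
      unfolding G_def
      by (rule Bochner_Integration.integral_diff[of lborel "\<lambda>p. K s A B p - K t A B p" "\<lambda>p. h * K t Ar B p"])
        (rule Bochner_Integration.integrable_diff[OF j1 j2], rule integrable_mult_right[OF j3])
    also have "integral\<^sup>L lborel (\<lambda>p. K s A B p - K t A B p) = integral\<^sup>L lborel (K s A B) - integral\<^sup>L lborel (K t A B)"
      by (rule Bochner_Integration.integral_diff[OF j1 j2])
    also have "integral\<^sup>L lborel (\<lambda>p. h * K t Ar B p) = h * integral\<^sup>L lborel (K t Ar B)"
      by (rule integral_mult_right_zero)
    finally show ?thesis by (simp add: ipK)
  qed
  have pt: "\<bar>G p\<bar> \<le> (h^2/2) * K (t + \<delta>) Ar Ar p + (h^2/2) * K (t + \<delta>) Br Br p" for p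
  proof -
    obtain x y where p: "p = (x, y)" by (cases p)
    define ws where "ws = W a40 a22 a04 s x y"
    define wt where "wt = W a40 a22 a04 t x y"
    define wd where "wd = W a40 a22 a04 (t + \<delta>) x y"
    define r where "r = x^2 + y^2"
    have wd: "wd \<ge> 0" unfolding wd_def using W_pos[of a40 a22 a04 "t + \<delta>" x y] by simp
    have b1: "\<bar>ws - wt - h * r * wt\<bar> \<le> h^2 * r^2 * wd"
      unfolding ws_def wt_def wd_def h_def r_def by (rule W_taylor_bound[OF hd])
    have b2: "\<bar>A x y * B x y\<bar> \<le> ((A x y)^2 + (B x y)^2) / 2"
    proof -
      have "0 \<le> (\<bar>A x y\<bar> - \<bar>B x y\<bar>)^2" by simp
      thus ?thesis by (simp add: power2_eq_square algebra_simps abs_mult)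
    qed
    have eG: "G p = A x y * B x y * (ws - wt - h * r * wt)"
      unfolding G_def p Ar_def ws_def wt_def r_def by (simp add: algebra_simps)
    have "\<bar>G p\<bar> = \<bar>A x y * B x y\<bar> * \<bar>ws - wt - h * r * wt\<bar>" unfolding eG by (simp add: abs_mult)
    also have "\<dots> \<le> ((A x y)^2 + (B x y)^2) / 2 * (h^2 * r^2 * wd)"
      by (intro mult_mono b1 b2) (auto intro!: mult_nonneg_nonneg wd)
    also have "\<dots> = (h^2/2) * K (t + \<delta>) Ar Ar p + (h^2/2) * K (t + \<delta>) Br Br p"
      unfolding p Ar_def Br_def wd_def r_def by (simp only: case_prod_conv alg1)
    finally show ?thesis .
  qed
  have nn: "0 \<le> (h^2/2) * K (t + \<delta>) Ar Ar p + (h^2/2) * K (t + \<delta>) Br Br p" for p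
    using pt[of p] by (meson abs_ge_zero order_trans)
  have pt1: "G p \<le> (h^2/2) * K (t + \<delta>) Ar Ar p + (h^2/2) * K (t + \<delta>) Br Br p" for p
    using pt[of p] by (simp only: abs_le_iff)
  have pt2: "- G p \<le> (h^2/2) * K (t + \<delta>) Ar Ar p + (h^2/2) * K (t + \<delta>) Br Br p" for p
    using pt[of p] by (simp only: abs_le_iff)
  have u1: "integral\<^sup>L lborel G \<le> (h^2/2) * integral\<^sup>L lborel (K (t + \<delta>) Ar Ar) + (h^2/2) * integral\<^sup>L lborel (K (t + \<delta>) Br Br)"
    by (rule int_le[OF i1 i2 pt1 nn])
  have u2: "integral\<^sup>L lborel (\<lambda>p. - G p) \<le> (h^2/2) * integral\<^sup>L lborel (K (t + \<delta>) Ar Ar) + (h^2/2) * integral\<^sup>L lborel (K (t + \<delta>) Br Br)"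
    by (rule int_le[OF i1 i2 pt2 nn])
  have "\<bar>integral\<^sup>L lborel G\<bar> \<le> (h^2/2) * (ip a40 a22 a04 (t + \<delta>) Ar Ar + ip a40 a22 a04 (t + \<delta>) Br Br)"
    using u1 u2 by (simp add: ipK abs_le_iff algebra_simps)
  thus ?thesis unfolding IG Ar_def Br_def h_def .
qed


lemma core:
  assumes t: "t \<in> U" and s: "s \<in> U" and td: "t + \<delta> \<in> U" and hd: "\<bar>s - t\<bar> \<le> \<delta>"
    and i: "i \<le> n" and j: "j \<le> n"
  shows "\<bar>ip a40 a22 a04 s (Q s n i) (Q s n j) - ip a40 a22 a04 t (Q t n i) (Q t n j)
           - (s - t) * ip a40 a22 a04 t (\<lambda>x y. Q t n i x y * (x^2 + y^2)) (Q t n j)\<bar>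
    \<le> (ip a40 a22 a04 (t + \<delta>) (\<lambda>x y. Q t n i x y * (x^2 + y^2)) (\<lambda>x y. Q t n i x y * (x^2 + y^2))
        + ip a40 a22 a04 (t + \<delta>) (\<lambda>x y. Q t n j x y * (x^2 + y^2)) (\<lambda>x y. Q t n j x y * (x^2 + y^2))) * (s - t)^2"
proof -
  define A where "A = Q t n i"
  define a where "a = Q s n i"
  define B where "B = Q t n j"
  define b where "b = Q s n j"
  define \<alpha> where "\<alpha> = (\<lambda>x y. A x y - a x y)"
  define \<beta> where "\<beta> = (\<lambda>x y. B x y - b x y)"
  define nA where "nA = ip a40 a22 a04 (t + \<delta>) (\<lambda>x y. A x y * (x^2 + y^2)) (\<lambda>x y. A x y * (x^2 + y^2))"
  define nB where "nB = ip a40 a22 a04 (t + \<delta>) (\<lambda>x y. B x y * (x^2 + y^2)) (\<lambda>x y. B x y * (x^2 + y^2))"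
  define D where "D = ip a40 a22 a04 t (\<lambda>x y. A x y * (x^2 + y^2)) B"
  define h where "h = s - t"
  have pA: "polyd n A" unfolding A_def by (rule Qpoly[OF t i])
  have pa: "polyd n a" unfolding a_def by (rule Qpoly[OF s i])
  have pB: "polyd n B" unfolding B_def by (rule Qpoly[OF t j])
  have pb: "polyd n b" unfolding b_def by (rule Qpoly[OF s j])
  have p\<alpha>: "polyd n \<alpha>" unfolding \<alpha>_def by (rule polyd_diff[OF pA pa])
  have p\<beta>: "polyd n \<beta>" unfolding \<beta>_def by (rule polyd_diff[OF pB pb])
  have ea: "a = (\<lambda>x y. A x y - \<alpha> x y)" unfolding \<alpha>_def by simp
  have eb: "b = (\<lambda>x y. B x y - \<beta> x y)" unfolding \<beta>_def by simp
  have eA: "A = (\<lambda>x y. a x y + \<alpha> x y)" unfolding \<alpha>_def by simp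
  have o1: "ip a40 a22 a04 s \<alpha> b = 0"
    unfolding \<alpha>_def A_def a_def b_def by (rule orth_diff[OF s t i j])
  have o2: "ip a40 a22 a04 s a \<beta> = 0"
    unfolding \<beta>_def B_def a_def b_def by (subst ip_sym) (rule orth_diff[OF s t j i])
  have "ip a40 a22 a04 s a b = ip a40 a22 a04 s A b - ip a40 a22 a04 s \<alpha> b"
    by (subst ea, rule ipd_diff_left(2)) (rule pd[OF s pA pb], rule pd[OF s p\<alpha> pb])
  also have "\<dots> = ip a40 a22 a04 s A b" using o1 by simp
  also have "\<dots> = ip a40 a22 a04 s b A" by (rule ip_sym)
  also have "\<dots> = ip a40 a22 a04 s B A - ip a40 a22 a04 s \<beta> A"
    by (subst eb, rule ipd_diff_left(2)) (rule pd[OF s pB pA], rule pd[OF s p\<beta> pA])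
  also have "ip a40 a22 a04 s \<beta> A = ip a40 a22 a04 s A \<beta>" by (rule ip_sym)
  also have "\<dots> = ip a40 a22 a04 s a \<beta> + ip a40 a22 a04 s \<alpha> \<beta>"
    by (subst eA, rule ipd_add_left(2)) (rule pd[OF s pa p\<beta>], rule pd[OF s p\<alpha> p\<beta>])
  finally have H: "ip a40 a22 a04 s a b = ip a40 a22 a04 s A B - ip a40 a22 a04 s \<alpha> \<beta>"
    using o2 by (simp add: ip_sym[of _ _ _ s B A])
  have tp: "\<bar>ip a40 a22 a04 s A B - ip a40 a22 a04 t A B - h * D\<bar> \<le> (h^2/2) * (nA + nB)"
    unfolding h_def D_def nA_def nB_def by (rule taylor_part[OF t s td hd pA pB])
  have cp: "\<bar>ip a40 a22 a04 s \<alpha> \<beta>\<bar> \<le> (ip a40 a22 a04 s \<alpha> \<alpha> + ip a40 a22 a04 s \<beta> \<beta>) / 2"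
    by (rule cross_part[OF s p\<alpha> p\<beta>])
  have b1: "ip a40 a22 a04 s \<alpha> \<alpha> \<le> h^2 * nA"
    unfolding \<alpha>_def A_def a_def h_def nA_def by (rule alpha_bound[OF t s td hd i])
  have b2: "ip a40 a22 a04 s \<beta> \<beta> \<le> h^2 * nB"
    unfolding \<beta>_def B_def b_def h_def nB_def by (rule alpha_bound[OF t s td hd j])
  have "\<bar>ip a40 a22 a04 s a b - ip a40 a22 a04 t A B - h * D\<bar>
      = \<bar>(ip a40 a22 a04 s A B - ip a40 a22 a04 t A B - h * D) - ip a40 a22 a04 s \<alpha> \<beta>\<bar>"
    unfolding H by (simp add: algebra_simps)
  also have "\<dots> \<le> \<bar>ip a40 a22 a04 s A B - ip a40 a22 a04 t A B - h * D\<bar> + \<bar>ip a40 a22 a04 s \<alpha> \<beta>\<bar>"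
    by (rule abs_triangle_ineq4)
  also have "\<dots> \<le> (nA + nB) * h^2"
    using tp cp b1 b2 by (simp add: field_simps)
  finally show ?thesis unfolding h_def nA_def nB_def D_def A_def B_def a_def b_def .
qed

end

lemma mult_entry:
  fixes A B :: "real mat"
  assumes "i < dim_row A" "j < dim_col B" "dim_col A = dim_row B"
  shows "(A * B) $$ (i, j) = (\<Sum>k<dim_col A. A $$ (i, k) * B $$ (k, j))"
  using assms by (simp add: index_mult_mat scalar_prod_def atLeast0LessThan index_row index_col)

lemma Lmat_dims: "dim_row (Lmat r k) = r" "dim_col (Lmat r k) = Suc r"
  unfolding Lmat_def by simp_all

lemma Hmat_dims: "dim_row (Hmat a b c s P n) = Suc n" "dim_col (Hmat a b c s P n) = Suc n"
  unfolding Hmat_def by simp_all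

lemma Hmat_entry: "k \<le> n \<Longrightarrow> l \<le> n \<Longrightarrow> Hmat a b c s P n $$ (k, l) = ip a b c s (P n k) (P n l)"
  unfolding Hmat_def by simp

lemma ip_move: "ip a b c s (\<lambda>x y. m x y * f x y) g = ip a b c s f (\<lambda>x y. m x y * g x y)"
  unfolding ip_def by (simp add: mult_ac)

lemma ip_lincomb_left:
  assumes "\<And>l. l \<in> S \<Longrightarrow> ip_defined a b c s (f l) g"
  shows "ip_defined a b c s (\<lambda>x y. \<Sum>l\<in>S. k l * f l x y) g \<and>
         ip a b c s (\<lambda>x y. \<Sum>l\<in>S. k l * f l x y) g = (\<Sum>l\<in>S. k l * ip a b c s (f l) g)"
proof -
  have "\<And>l. l \<in> S \<Longrightarrow> ip_defined a b c s (\<lambda>x y. k l * f l x y) g \<and>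
     ip a b c s (\<lambda>x y. k l * f l x y) g = k l * ip a b c s (f l) g"
    using assms ipd_smul_left by blast
  thus ?thesis using ipd_sum_left[of S a b c s "\<lambda>l x y. k l * f l x y" g] by simp
qed

definition mulk :: "nat \<Rightarrow> real \<Rightarrow> real \<Rightarrow> real" where
  "mulk k x y = (if k = 1 then x else y)"

lemma polyd_mulk: "polyd m f \<Longrightarrow> polyd (Suc m) (\<lambda>x y. mulk k x y * f x y)"
  unfolding mulk_def by (cases "k = 1") (simp_all add: polyd_mulx polyd_muly)

lemma tt_k:
  assumes "three_term P E" "k = 1 \<or> k = 2" "i \<le> n"
  shows "(\<lambda>x y. mulk k x y * P n i x y) = (\<lambda>x y. (\<Sum>l\<le>Suc n. Lmat (Suc n) k $$ (i, l) * P (Suc n) l x y)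
                        + (\<Sum>l<n. E n k $$ (i, l) * P (n - 1) l x y))"
  using assms unfolding three_term_def mulk_def by auto

context ops_setting begin

lemma K1:
  assumes t: "t \<in> U" and k: "k = 1 \<or> k = 2" and l: "l \<le> Suc n" and j: "j \<le> n"
  shows "ip a40 a22 a04 t (\<lambda>x y. mulk k x y * Q t (Suc n) l x y) (Q t n j)
       = (\<Sum>m<Suc n. E t (Suc n) k $$ (l, m) * ip a40 a22 a04 t (Q t n m) (Q t n j))"
proof -
  have d: "ip_defined a40 a22 a04 t (Q t p q) (Q t n j)" if "q \<le> p" for p q
    using Qdef[OF t that j] .
  let ?F = "\<lambda>x y. \<Sum>m\<le>Suc (Suc n). Lmat (Suc (Suc n)) k $$ (l, m) * Q t (Suc (Suc n)) m x y"
  let ?G = "\<lambda>x y. \<Sum>m<Suc n. E t (Suc n) k $$ (l, m) * Q t n m x y"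
  have e: "(\<lambda>x y. mulk k x y * Q t (Suc n) l x y) = (\<lambda>x y. ?F x y + ?G x y)"
    using tt_k[OF tt[OF t] k l] by simp
  have F: "ip_defined a40 a22 a04 t ?F (Q t n j) \<and> ip a40 a22 a04 t ?F (Q t n j) = 0"
  proof -
    have "ip a40 a22 a04 t (Q t (Suc (Suc n)) m) (Q t n j) = 0" if "m \<le> Suc (Suc n)" for m
      using ops[OF t] that j unfolding monic_OPS_def by simp
    thus ?thesis using ip_lincomb_left[of "{..Suc (Suc n)}" a40 a22 a04 t "Q t (Suc (Suc n))" "Q t n j"] d
      by simp
  qed
  have G: "ip_defined a40 a22 a04 t ?G (Q t n j) \<and> ip a40 a22 a04 t ?G (Q t n j)
      = (\<Sum>m<Suc n. E t (Suc n) k $$ (l, m) * ip a40 a22 a04 t (Q t n m) (Q t n j))"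
    by (rule ip_lincomb_left) (use d in auto)
  show ?thesis unfolding e using F G by (simp add: ipd_add_left)
qed

lemma K2:
  assumes t: "t \<in> U" and k: "k = 1 \<or> k = 2" and l: "l < n" and j: "j \<le> n"
  shows "ip a40 a22 a04 t (\<lambda>x y. mulk k x y * Q t (n - 1) l x y) (Q t n j)
       = (\<Sum>m<Suc n. Lmat n k $$ (l, m) * ip a40 a22 a04 t (Q t n m) (Q t n j))"
proof -
  have d: "ip_defined a40 a22 a04 t (Q t p q) (Q t n j)" if "q \<le> p" for p q
    using Qdef[OF t that j] .
  have n: "Suc (n - 1) = n" using l by simp
  let ?F = "\<lambda>x y. \<Sum>m<Suc n. Lmat n k $$ (l, m) * Q t n m x y"
  let ?G = "\<lambda>x y. \<Sum>m<n - 1. E t (n - 1) k $$ (l, m) * Q t (n - 1 - 1) m x y"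
  have e: "(\<lambda>x y. mulk k x y * Q t (n - 1) l x y) = (\<lambda>x y. ?F x y + ?G x y)"
    using tt_k[OF tt[OF t] k, of l "n - 1"] l n by (simp add: lessThan_Suc_atMost[symmetric])
  have G: "ip_defined a40 a22 a04 t ?G (Q t n j) \<and> ip a40 a22 a04 t ?G (Q t n j) = 0"
  proof -
    have "ip a40 a22 a04 t (Q t (n - 1 - 1) m) (Q t n j) = 0" if "m < n - 1" for m
      using ops[OF t] that j l unfolding monic_OPS_def by simp
    thus ?thesis using ip_lincomb_left[of "{..<n - 1}" a40 a22 a04 t "Q t (n - 1 - 1)" "Q t n j"] d
      by simp
  qed
  have F: "ip_defined a40 a22 a04 t ?F (Q t n j) \<and> ip a40 a22 a04 t ?F (Q t n j)
      = (\<Sum>m<Suc n. Lmat n k $$ (l, m) * ip a40 a22 a04 t (Q t n m) (Q t n j))"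
    by (rule ip_lincomb_left) (use d in auto)
  show ?thesis unfolding e using F G by (simp add: ipd_add_left)
qed

lemma Xk:
  assumes t: "t \<in> U" and k: "k = 1 \<or> k = 2" and i: "i \<le> n" and j: "j \<le> n"
  shows "ip a40 a22 a04 t (\<lambda>x y. mulk k x y * Q t n i x y) (\<lambda>x y. mulk k x y * Q t n j x y)
    = (\<Sum>l<Suc (Suc n). Lmat (Suc n) k $$ (i, l) * (\<Sum>m<Suc n. E t (Suc n) k $$ (l, m) * Hmat a40 a22 a04 t (Q t) n $$ (m, j)))
    + (\<Sum>l<n. E t n k $$ (i, l) * (\<Sum>m<Suc n. Lmat n k $$ (l, m) * Hmat a40 a22 a04 t (Q t) n $$ (m, j)))"
proof -
  define B' where "B' = (\<lambda>x y. mulk k x y * Q t n j x y)"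
  have pB': "polyd (Suc n) B'" unfolding B'_def by (rule polyd_mulk[OF Qpoly[OF t j]])
  have d: "ip_defined a40 a22 a04 t (Q t p q) B'" if "q \<le> p" for p q
    by (rule pd[OF t Qpoly[OF t that] pB'])
  let ?F = "\<lambda>x y. \<Sum>l\<le>Suc n. Lmat (Suc n) k $$ (i, l) * Q t (Suc n) l x y"
  let ?G = "\<lambda>x y. \<Sum>l<n. E t n k $$ (i, l) * Q t (n - 1) l x y"
  have e: "(\<lambda>x y. mulk k x y * Q t n i x y) = (\<lambda>x y. ?F x y + ?G x y)"
    using tt_k[OF tt[OF t] k i] by simp
  have F: "ip_defined a40 a22 a04 t ?F B' \<and> ip a40 a22 a04 t ?F B'
      = (\<Sum>l\<le>Suc n. Lmat (Suc n) k $$ (i, l) * ip a40 a22 a04 t (Q t (Suc n) l) B')"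
    by (rule ip_lincomb_left) (use d in auto)
  have G: "ip_defined a40 a22 a04 t ?G B' \<and> ip a40 a22 a04 t ?G B'
      = (\<Sum>l<n. E t n k $$ (i, l) * ip a40 a22 a04 t (Q t (n - 1) l) B')"
    by (rule ip_lincomb_left) (use d in auto)
  have F2: "ip a40 a22 a04 t (Q t (Suc n) l) B' = (\<Sum>m<Suc n. E t (Suc n) k $$ (l, m) * Hmat a40 a22 a04 t (Q t) n $$ (m, j))"
    if "l \<le> Suc n" for l
  proof -
    have "ip a40 a22 a04 t (Q t (Suc n) l) B' = ip a40 a22 a04 t (\<lambda>x y. mulk k x y * Q t (Suc n) l x y) (Q t n j)"
      unfolding B'_def by (rule ip_move[symmetric])
    also have "\<dots> = (\<Sum>m<Suc n. E t (Suc n) k $$ (l, m) * ip a40 a22 a04 t (Q t n m) (Q t n j))"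
      by (rule K1[OF t k that j])
    finally show ?thesis using j by (simp add: Hmat_entry)
  qed
  have G2: "ip a40 a22 a04 t (Q t (n - 1) l) B' = (\<Sum>m<Suc n. Lmat n k $$ (l, m) * Hmat a40 a22 a04 t (Q t) n $$ (m, j))"
    if "l < n" for l
  proof -
    have "ip a40 a22 a04 t (Q t (n - 1) l) B' = ip a40 a22 a04 t (\<lambda>x y. mulk k x y * Q t (n - 1) l x y) (Q t n j)"
      unfolding B'_def by (rule ip_move[symmetric])
    also have "\<dots> = (\<Sum>m<Suc n. Lmat n k $$ (l, m) * ip a40 a22 a04 t (Q t n m) (Q t n j))"
      by (rule K2[OF t k that j])
    finally show ?thesis using j by (simp add: Hmat_entry)
  qed
  have "ip a40 a22 a04 t (\<lambda>x y. mulk k x y * Q t n i x y) B'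
      = (\<Sum>l\<le>Suc n. Lmat (Suc n) k $$ (i, l) * ip a40 a22 a04 t (Q t (Suc n) l) B')
      + (\<Sum>l<n. E t n k $$ (i, l) * ip a40 a22 a04 t (Q t (n - 1) l) B')"
    unfolding e using F G by (simp add: ipd_add_left)
  also have "\<dots> = (\<Sum>l<Suc (Suc n). Lmat (Suc n) k $$ (i, l) * (\<Sum>m<Suc n. E t (Suc n) k $$ (l, m) * Hmat a40 a22 a04 t (Q t) n $$ (m, j)))
    + (\<Sum>l<n. E t n k $$ (i, l) * (\<Sum>m<Suc n. Lmat n k $$ (l, m) * Hmat a40 a22 a04 t (Q t) n $$ (m, j)))"
  proof -
    have s1: "(\<Sum>l\<le>Suc n. Lmat (Suc n) k $$ (i, l) * ip a40 a22 a04 t (Q t (Suc n) l) B')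
      = (\<Sum>l<Suc (Suc n). Lmat (Suc n) k $$ (i, l) * (\<Sum>m<Suc n. E t (Suc n) k $$ (l, m) * Hmat a40 a22 a04 t (Q t) n $$ (m, j)))"
      unfolding lessThan_Suc_atMost by (rule sum.cong[OF refl]) (simp only: F2 atMost_iff lessThan_Suc_atMost)
    have s2: "(\<Sum>l<n. E t n k $$ (i, l) * ip a40 a22 a04 t (Q t (n - 1) l) B')
      = (\<Sum>l<n. E t n k $$ (i, l) * (\<Sum>m<Suc n. Lmat n k $$ (l, m) * Hmat a40 a22 a04 t (Q t) n $$ (m, j)))"
      by (rule sum.cong[OF refl]) (simp only: G2 lessThan_iff)
    show ?thesis by (simp only: s1 s2)
  qed
  finally show ?thesis unfolding B'_def .
qed

end

lemma sum_swap_mult: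
  "(\<Sum>m\<in>M. (\<Sum>l\<in>L. a l * b l m) * c m) = (\<Sum>l\<in>L. a l * (\<Sum>m\<in>M. b l m * c m))"
  for a :: "nat \<Rightarrow> real"
  by (simp add: sum_distrib_left sum_distrib_right mult.assoc) (rule sum.swap)

context ops_setting begin

lemma V_entry:
  assumes t: "t \<in> U" and i: "i \<le> n" and j: "j \<le> n"
  shows "(Vmat (E t) n * Hmat a40 a22 a04 t (Q t) n) $$ (i, j) =
    (\<Sum>k\<in>{1,2}. (\<Sum>l<Suc (Suc n). Lmat (Suc n) k $$ (i, l) * (\<Sum>m<Suc n. E t (Suc n) k $$ (l, m) * Hmat a40 a22 a04 t (Q t) n $$ (m, j)))
    + (\<Sum>l<n. E t n k $$ (i, l) * (\<Sum>m<Suc n. Lmat n k $$ (l, m) * Hmat a40 a22 a04 t (Q t) n $$ (m, j))))"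
proof -
  have cE: "E t p k \<in> carrier_mat (Suc p) p" if "k = 1 \<or> k = 2" for p k
  proof -
    have "\<forall>p k. (k = 1 \<or> k = 2) \<longrightarrow> E t p k \<in> carrier_mat (Suc p) p"
      using tt[OF t] unfolding three_term_def by (rule conjunct1)
    thus ?thesis using that by blast
  qed
  have dE: "dim_row (E t p k) = Suc p" "dim_col (E t p k) = p" if "k = 1 \<or> k = 2" for p k
    using cE[OF that] by auto
  define H where "H = Hmat a40 a22 a04 t (Q t) n"
  have dH: "dim_row H = Suc n" "dim_col H = Suc n" unfolding H_def by (simp_all add: Hmat_dims)
  define M1 where "M1 k = Lmat (Suc n) k * E t (Suc n) k" for k
  define M3 where "M3 k = E t n k * Lmat n k" for k
  have dM1: "dim_row (M1 k) = Suc n" "dim_col (M1 k) = Suc n" if "k = 1 \<or> k = 2" for k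
    unfolding M1_def using dE[OF that] by (simp_all add: Lmat_dims)
  have dM3: "dim_row (M3 k) = Suc n" "dim_col (M3 k) = Suc n" if "k = 1 \<or> k = 2" for k
    unfolding M3_def using dE[OF that] by (simp_all add: Lmat_dims)
  have eM1: "M1 k $$ (i, m) = (\<Sum>l<Suc (Suc n). Lmat (Suc n) k $$ (i, l) * E t (Suc n) k $$ (l, m))"
    if "k = 1 \<or> k = 2" "m < Suc n" for k m
    unfolding M1_def using dE[OF that(1)] that i by (subst mult_entry) (simp_all add: Lmat_dims)
  have eM3: "M3 k $$ (i, m) = (\<Sum>l<n. E t n k $$ (i, l) * Lmat n k $$ (l, m))"
    if "k = 1 \<or> k = 2" "m < Suc n" for k m
    unfolding M3_def using dE[OF that(1)] that i by (subst mult_entry) (simp_all add: Lmat_dims)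
  have V: "Vmat (E t) n = M1 1 + M1 2 + M3 1 + M3 2"
    unfolding Vmat_def M1_def M3_def by simp
  have eV: "Vmat (E t) n $$ (i, m) = M1 1 $$ (i, m) + M1 2 $$ (i, m) + M3 1 $$ (i, m) + M3 2 $$ (i, m)"
    if "m < Suc n" for m
    unfolding V using that i dM1 dM3 by (simp add: index_add_mat)
  have dV: "dim_row (Vmat (E t) n) = Suc n" "dim_col (Vmat (E t) n) = Suc n"
    unfolding V using dM1 dM3 by simp_all
  have "(Vmat (E t) n * H) $$ (i, j) = (\<Sum>m<Suc n. Vmat (E t) n $$ (i, m) * H $$ (m, j))"
    using i j dV dH by (subst mult_entry) simp_all
  also have "\<dots> = (\<Sum>m<Suc n. (M1 1 $$ (i, m) + M1 2 $$ (i, m) + M3 1 $$ (i, m) + M3 2 $$ (i, m)) * H $$ (m, j))"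
    by (rule sum.cong[OF refl]) (simp add: eV)
  also have "\<dots> = (\<Sum>m<Suc n. M1 1 $$ (i, m) * H $$ (m, j)) + (\<Sum>m<Suc n. M1 2 $$ (i, m) * H $$ (m, j))
     + (\<Sum>m<Suc n. M3 1 $$ (i, m) * H $$ (m, j)) + (\<Sum>m<Suc n. M3 2 $$ (i, m) * H $$ (m, j))"
    by (simp only: sum.distrib distrib_right)
  finally have main: "(Vmat (E t) n * H) $$ (i, j) = (\<Sum>m<Suc n. M1 1 $$ (i, m) * H $$ (m, j)) + (\<Sum>m<Suc n. M1 2 $$ (i, m) * H $$ (m, j))
     + (\<Sum>m<Suc n. M3 1 $$ (i, m) * H $$ (m, j)) + (\<Sum>m<Suc n. M3 2 $$ (i, m) * H $$ (m, j))" .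
  have S1: "(\<Sum>m<Suc n. M1 k $$ (i, m) * H $$ (m, j)) = (\<Sum>l<Suc (Suc n). Lmat (Suc n) k $$ (i, l) * (\<Sum>m<Suc n. E t (Suc n) k $$ (l, m) * H $$ (m, j)))"
    if "k = 1 \<or> k = 2" for k
  proof -
    have "(\<Sum>m<Suc n. M1 k $$ (i, m) * H $$ (m, j)) = (\<Sum>m<Suc n. (\<Sum>l<Suc (Suc n). Lmat (Suc n) k $$ (i, l) * E t (Suc n) k $$ (l, m)) * H $$ (m, j))"
      by (rule sum.cong[OF refl]) (simp only: eM1[OF that] lessThan_iff)
    thus ?thesis by (simp only: sum_swap_mult)
  qed
  have S3: "(\<Sum>m<Suc n. M3 k $$ (i, m) * H $$ (m, j)) = (\<Sum>l<n. E t n k $$ (i, l) * (\<Sum>m<Suc n. Lmat n k $$ (l, m) * H $$ (m, j)))"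
    if "k = 1 \<or> k = 2" for k
  proof -
    have "(\<Sum>m<Suc n. M3 k $$ (i, m) * H $$ (m, j)) = (\<Sum>m<Suc n. (\<Sum>l<n. E t n k $$ (i, l) * Lmat n k $$ (l, m)) * H $$ (m, j))"
      by (rule sum.cong[OF refl]) (simp only: eM3[OF that] lessThan_iff)
    thus ?thesis by (simp only: sum_swap_mult)
  qed
  have k12: "(1::nat) = 1 \<or> (1::nat) = 2" "(2::nat) = 1 \<or> (2::nat) = 2" by simp_all
  have sum12: "(\<Sum>k\<in>{1,2::nat}. f k) = f 1 + f 2" for f :: "nat \<Rightarrow> real" by simp
  show ?thesis unfolding H_def[symmetric] main S1[OF k12(1)] S1[OF k12(2)] S3[OF k12(1)] S3[OF k12(2)] sum12
    by (simp only: add_ac)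
qed

lemma D_eq:
  assumes t: "t \<in> U" and i: "i \<le> n" and j: "j \<le> n"
  shows "ip a40 a22 a04 t (\<lambda>x y. Q t n i x y * (x^2 + y^2)) (Q t n j) = (Vmat (E t) n * Hmat a40 a22 a04 t (Q t) n) $$ (i, j)"
proof -
  define A where "A = Q t n i"
  define B where "B = Q t n j"
  have pA: "polyd n A" unfolding A_def by (rule Qpoly[OF t i])
  have pB: "polyd n B" unfolding B_def by (rule Qpoly[OF t j])
  have e: "(\<lambda>x y. A x y * (x^2 + y^2)) = (\<lambda>x y. mulk 1 x y * (mulk 1 x y * A x y) + mulk 2 x y * (mulk 2 x y * A x y))"
    by (simp add: mulk_def power2_eq_square algebra_simps)
  have p1: "polyd (Suc (Suc n)) (\<lambda>x y. mulk k x y * (mulk k x y * A x y))" for k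
    by (intro polyd_mulk pA)
  have "ip a40 a22 a04 t (\<lambda>x y. A x y * (x^2 + y^2)) B
     = ip a40 a22 a04 t (\<lambda>x y. mulk 1 x y * (mulk 1 x y * A x y)) B + ip a40 a22 a04 t (\<lambda>x y. mulk 2 x y * (mulk 2 x y * A x y)) B"
    unfolding e by (rule ipd_add_left(2)) (rule pd[OF t p1 pB])+
  also have "\<dots> = ip a40 a22 a04 t (\<lambda>x y. mulk 1 x y * A x y) (\<lambda>x y. mulk 1 x y * B x y)
     + ip a40 a22 a04 t (\<lambda>x y. mulk 2 x y * A x y) (\<lambda>x y. mulk 2 x y * B x y)"
    by (simp only: ip_move)
  also have "\<dots> = (Vmat (E t) n * Hmat a40 a22 a04 t (Q t) n) $$ (i, j)"
  proof -
    have k12: "(1::nat) = 1 \<or> (1::nat) = 2" "(2::nat) = 1 \<or> (2::nat) = 2" by simp_all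
    have sum12: "(\<Sum>k\<in>{1,2::nat}. f k) = f 1 + f 2" for f :: "nat \<Rightarrow> real" by simp
    show ?thesis unfolding V_entry[OF t i j] A_def B_def sum12 Xk[OF t k12(1) i j] Xk[OF t k12(2) i j] ..
  qed
  finally show ?thesis unfolding A_def B_def .
qed

end

theorem lemma6p1:
  fixes a40 a22 a04 :: real
    and Q :: "real \<Rightarrow> nat \<Rightarrow> nat \<Rightarrow> real \<Rightarrow> real \<Rightarrow> real"
    and E :: "real \<Rightarrow> nat \<Rightarrow> nat \<Rightarrow> real mat"
    and U :: "real set" and t :: real and n :: nat
  assumes "a40 \<ge> 0" "a22 \<ge> 0" "a04 \<ge> 0" "a40 + a22 > 0" "a22 + a04 > 0"
    and "open U" and "t \<in> U"
    and "\<And>s. s \<in> U \<Longrightarrow> monic_OPS a40 a22 a04 s (Q s)"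
    and "\<And>s. s \<in> U \<Longrightarrow> three_term (Q s) (E s)"
  shows "\<forall>i\<le>n. \<forall>j\<le>n.
           ((\<lambda>s. Hmat a40 a22 a04 s (Q s) n $$ (i, j)) has_real_derivative
              (Vmat (E t) n * Hmat a40 a22 a04 t (Q t) n) $$ (i, j)) (at t)"
proof (intro allI impI)
  fix i j assume i: "i \<le> n" and j: "j \<le> n"
  interpret ops_setting a40 a22 a04 U Q E
    using assms(8,9) by unfold_locales auto
  have t: "t \<in> U" by fact
  obtain e where e: "e > 0" "ball t e \<subseteq> U" using assms(6,7) open_contains_ball by blast
  define \<delta> where "\<delta> = e / 2"
  have d: "\<delta> > 0" unfolding \<delta>_def using e by simp
  have inU: "s \<in> U" if "\<bar>s - t\<bar> \<le> \<delta>" for s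
  proof -
    have "s \<in> ball t e" using that e(1) unfolding \<delta>_def by (simp add: dist_real_def abs_minus_commute)
    thus ?thesis using e(2) by blast
  qed
  have td: "t + \<delta> \<in> U" using inU[of "t + \<delta>"] d by simp
  have "((\<lambda>s. Hmat a40 a22 a04 s (Q s) n $$ (i, j)) has_real_derivative
         ip a40 a22 a04 t (\<lambda>x y. Q t n i x y * (x^2 + y^2)) (Q t n j)) (at t)"
  proof (rule deriv_from_bound[OF d])
    fix s assume hs: "\<bar>s - t\<bar> \<le> \<delta>"
    show "\<bar>Hmat a40 a22 a04 s (Q s) n $$ (i, j) - Hmat a40 a22 a04 t (Q t) n $$ (i, j)
         - (s - t) * ip a40 a22 a04 t (\<lambda>x y. Q t n i x y * (x^2 + y^2)) (Q t n j)\<bar>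
      \<le> (ip a40 a22 a04 (t + \<delta>) (\<lambda>x y. Q t n i x y * (x^2 + y^2)) (\<lambda>x y. Q t n i x y * (x^2 + y^2))
        + ip a40 a22 a04 (t + \<delta>) (\<lambda>x y. Q t n j x y * (x^2 + y^2)) (\<lambda>x y. Q t n j x y * (x^2 + y^2))) * (s - t)^2"
      unfolding Hmat_entry[OF i j] by (rule core[OF t inU[OF hs] td hs i j])
  qed
  thus "((\<lambda>s. Hmat a40 a22 a04 s (Q s) n $$ (i, j)) has_real_derivative
              (Vmat (E t) n * Hmat a40 a22 a04 t (Q t) n) $$ (i, j)) (at t)"
    unfolding D_eq[OF t i j] .
qed

end
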